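(* Consider a direct channel Omega implementation on a fully connected network of $n$ processes in which, in each round, each directed channel is timely independently with probability $p<1$, independently across rounds. Then the leader stability time tends to $0$ exponentially fast as $n\to\infty$. Moreover, if the leader stability time is to remain above a fixed constant $E>0$ as $n$ grows, then the channel timeliness probability $p=p_n$ must converge to $1$ exponentially fast as $n\to\infty$.
   Context: A network has $n$ processes and a directed channel from every process to every other. Time is divided into rounds; in each round every directed channel is timely with probability $p$, independently of other channels and of other rounds. In a direct channel (single-hop) Omega implementation, a process can be the leader in a round only if, in that round, it has a timely direct channel to every other process. For a fixed process $x$, let $X$ be the number $r\ge 0$ of consecutive rounds during which $x$ retains timely direct channels to all other processes before the property first fails, so that $\mathbb{P}(X=r)=q^r(1-q)$ with $q=p^{n-1}$. The leader stability time is $\mathbb{E}(X)$.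
   Formalization: In the second part, $p=p_n$ converges to 1 and eventually satisfies $p_n^{n-1}$ >= E/(1+E), in place of converging to 1 exponentially fast. Each condition added here is assumed in the paper as well or is needed for the statement above to hold. *)

theory Defs
  imports "HOL-Analysis.Analysis"
begin

text \<open>Probability that a fixed process has timely direct channels to all n-1 others in a round.\<close>
definition succ_prob :: "nat \<Rightarrow> real \<Rightarrow> real" where
  "succ_prob n p = p ^ (n - 1)"

definition leader_stability_time :: "nat \<Rightarrow> real \<Rightarrow> real" where
  "leader_stability_time n p =
     (\<Sum>r. real r * (succ_prob n p ^ r * (1 - succ_prob n p)))"

end

theory Submission
  imports Defs
begin

lemma lst_eq:
  fixes q :: real assumes "0 \<le> q" "q < 1"
  shows "(\<lambda>r. real r * (q ^ r * (1 - q))) sums (q / (1 - q))"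
proof -
  have "(\<lambda>n. of_nat (Suc n) * q ^ n) sums (1 / (1 - q)^2)"
    using assms by (intro geometric_deriv_sums) auto
  hence "(\<lambda>n. (q * (1 - q)) * (of_nat (Suc n) * q ^ n)) sums ((q * (1 - q)) * (1 / (1 - q)^2))"
    by (rule sums_mult)
  moreover have "(q * (1 - q)) * (1 / (1 - q)^2) = q / (1 - q)"
  proof -
    have "1 - q \<noteq> 0" using assms by simp
    thus ?thesis by (simp add: power2_eq_square)
  qed
  ultimately have "(\<lambda>n. real (Suc n) * (q ^ (Suc n) * (1 - q))) sums (q / (1 - q))"
    by (simp add: algebra_simps)
  thus ?thesis using sums_Suc_iff[of "\<lambda>r. real r * (q ^ r * (1 - q))"] by simp
qed

lemma lst_val:
  assumes "0 \<le> p" "p < 1" "n \<ge> 2"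
  shows "leader_stability_time n p = p ^ (n - 1) / (1 - p ^ (n - 1))"
proof -
  have q1: "p ^ (n - 1) < 1" using assms by (simp add: power_less_one_iff)
  show ?thesis unfolding leader_stability_time_def succ_prob_def
    using sums_unique[OF lst_eq[OF _ q1]] assms by simp
qed

lemma part1_bound:
  fixes p :: real assumes "0 \<le> p" "p < 1"
  shows "\<exists>C r. 0 < C \<and> 0 \<le> r \<and> r < 1 \<and> (\<forall>n\<ge>2. leader_stability_time n p \<le> C * r ^ n)"
proof (cases "p = 0")
  case True
  have "\<forall>n\<ge>2. leader_stability_time n p \<le> 1 * (0::real) ^ n"
  proof (intro allI impI)
    fix n :: nat assume n: "n \<ge> 2"
    have z1: "(0::real) ^ (n - 1) = 0" using n by simp
    have z2: "(0::real) ^ n = 0" using n by simp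
    have "leader_stability_time n p = 0" using lst_val[OF assms n] True by (simp only: z1)
    thus "leader_stability_time n p \<le> 1 * (0::real) ^ n" using z2 by simp
  qed
  thus ?thesis by (intro exI[of _ 1] exI[of _ 0]) auto
next
  case False
  hence pp: "0 < p" using assms by simp
  have "\<forall>n\<ge>2. leader_stability_time n p \<le> 1 / (p * (1 - p)) * p ^ n"
  proof (intro allI impI)
    fix n :: nat assume n: "n \<ge> 2"
    define q where "q = p ^ (n - 1)"
    have q0: "0 \<le> q" using assms q_def by simp
    have qp: "q \<le> p"
    proof -
      have "p ^ (n - 1) \<le> p ^ 1" using power_decreasing[of 1 "n - 1" p] assms n by linarith
      thus ?thesis unfolding q_def by simp
    qed
    have pn: "p ^ n = p * q"
    proof -
      have "n = Suc (n - 1)" using n by simp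
      hence "p ^ n = p ^ Suc (n - 1)" by simp
      thus ?thesis unfolding q_def by (simp only: power_Suc)
    qed
    have "leader_stability_time n p = q / (1 - q)" using lst_val[OF assms n] q_def by simp
    also have "\<dots> \<le> q / (1 - p)" using qp q0 assms
      by (intro divide_left_mono) auto
    also have "\<dots> = 1 / (p * (1 - p)) * p ^ n" using pn pp assms by (simp add: field_simps)
    finally show "leader_stability_time n p \<le> 1 / (p * (1 - p)) * p ^ n" .
  qed
  thus ?thesis using pp assms by (intro exI[of _ "1 / (p * (1 - p))"] exI[of _ p]) auto
qed

lemma lst_nonneg:
  assumes "0 \<le> p" "p < 1" "n \<ge> 2"
  shows "0 \<le> leader_stability_time n p"
proof -
  have "p ^ (n - 1) < 1" using assms by (simp add: power_less_one_iff)
  thus ?thesis using lst_val[OF assms] assms by simp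
qed

lemma part1:
  fixes p :: real assumes "0 \<le> p" "p < 1"
  shows "((\<lambda>n. leader_stability_time n p) \<longlonglongrightarrow> 0) \<and>
            (\<exists>C r. 0 < C \<and> 0 \<le> r \<and> r < 1 \<and>
               (\<forall>n\<ge>2. leader_stability_time n p \<le> C * r ^ n))"
proof -
  obtain C r where Cr: "0 < C" "0 \<le> r" "r < 1" "\<forall>n\<ge>2. leader_stability_time n p \<le> C * r ^ n"
    using part1_bound[OF assms] by blast
  have "(\<lambda>n. C * r ^ n) \<longlonglongrightarrow> C * 0"
    using Cr by (intro tendsto_mult tendsto_const LIMSEQ_power_zero) auto
  have "(\<lambda>n. leader_stability_time n p) \<longlonglongrightarrow> 0"
  proof (rule tendsto_sandwich[where f="\<lambda>_. 0" and h="\<lambda>n. C * r ^ n"])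
    show "\<forall>\<^sub>F n in sequentially. (0::real) \<le> leader_stability_time n p"
      using eventually_ge_at_top[of "2::nat"]
      by (rule eventually_mono) (rule lst_nonneg[OF assms])
    show "\<forall>\<^sub>F n in sequentially. leader_stability_time n p \<le> C * r ^ n"
      using eventually_ge_at_top[of "2::nat"]
      by (rule eventually_mono) (use Cr(4) in blast)
  qed (use \<open>(\<lambda>n. C * r ^ n) \<longlonglongrightarrow> C * 0\<close> in simp_all)
  thus ?thesis using Cr by blast
qed

lemma part2:
  fixes pn :: "nat \<Rightarrow> real" and E :: real
  assumes "\<forall>n. 0 \<le> pn n \<and> pn n < 1" "0 < E"
    "\<forall>\<^sub>F n in sequentially. E \<le> leader_stability_time n (pn n)"
  shows "(pn \<longlonglongrightarrow> 1) \<and> (\<forall>\<^sub>F n in sequentially. E / (1 + E) \<le> pn n ^ (n - 1))"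
proof -
  have ev: "\<forall>\<^sub>F n in sequentially. n \<ge> 2 \<and> E / (1 + E) \<le> pn n ^ (n - 1)"
    using assms(3) eventually_ge_at_top[of "2::nat"]
  proof (eventually_elim)
    case (elim n)
    define q where "q = pn n ^ (n - 1)"
    have q1: "q < 1" using assms(1) elim q_def by (simp add: power_less_one_iff)
    have "E \<le> q / (1 - q)" using lst_val[of "pn n" n] assms(1) elim q_def by simp
    hence "E * (1 - q) \<le> q" using q1 by (simp add: field_simps)
    hence "E \<le> q * (1 + E)" by (simp add: algebra_simps)
    hence "E / (1 + E) \<le> q" using assms(2) by (simp add: field_simps)
    thus ?case using elim q_def by simp
  qed
  define c where "c = E / (1 + E)"
  have c0: "0 < c" using assms(2) c_def by simp
  have lim: "(\<lambda>n. root (n - 1) c) \<longlonglongrightarrow> 1"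
    by (rule filterlim_compose[OF LIMSEQ_root_const[OF c0] filterlim_minus_const_nat_at_top])
  have "pn \<longlonglongrightarrow> 1"
  proof (rule tendsto_sandwich[OF _ _ lim tendsto_const])
    show "\<forall>\<^sub>F n in sequentially. pn n \<le> 1" using assms(1) by (simp add: less_imp_le)
    show "\<forall>\<^sub>F n in sequentially. root (n - 1) c \<le> pn n"
      using ev
    proof (eventually_elim)
      case (elim n)
      have "root (n - 1) c \<le> root (n - 1) (pn n ^ (n - 1))"
        using elim c_def c0 by (intro real_root_le_mono) auto
      also have "\<dots> = pn n" using elim assms(1) real_root_power_cancel[of "n - 1" "pn n"] by auto
      finally show ?case .
    qed
  qed
  thus ?thesis using ev by (auto elim: eventually_mono)
qed

theorem theorem3:
  shows "(\<forall>p::real. 0 \<le> p \<and> p < 1 \<longrightarrow>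
            ((\<lambda>n. leader_stability_time n p) \<longlonglongrightarrow> 0) \<and>
            (\<exists>C r. 0 < C \<and> 0 \<le> r \<and> r < 1 \<and>
               (\<forall>n\<ge>2. leader_stability_time n p \<le> C * r ^ n)))
       \<and> (\<forall>(pn :: nat \<Rightarrow> real) (E :: real).
            (\<forall>n. 0 \<le> pn n \<and> pn n < 1) \<and> 0 < E \<and>
            (\<forall>\<^sub>F n in sequentially. E \<le> leader_stability_time n (pn n))
            \<longrightarrow> (pn \<longlonglongrightarrow> 1) \<and>
                (\<forall>\<^sub>F n in sequentially. E / (1 + E) \<le> pn n ^ (n - 1)))"
  using part1 part2 by blast

end
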